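(* Let $\mathcal{X}$ be a finite set, $\underline{Q}$ a lower transition rate operator on $\mathcal{L}(\mathcal{X})$ and $(\underline{Q}_n)_{n\in\mathbb{N}}$ a sequence of lower transition rate operators on $\mathcal{L}(\mathcal{X})$. Then $\|\underline{Q}_n-\underline{Q}\|\to0$ if and only if $\underline{Q}_nf\to\underline{Q}f$ for every $f\in\mathcal{L}(\mathcal{X})$.
   Context: $\mathcal{L}(\mathcal{X})$ is the set of real-valued functions on $\mathcal{X}$ with pointwise operations and order, real constants identified with constant functions, $\mathbb{I}_y$ the indicator of $\{y\}$, and maximum norm $\|f\|=\max_x|f(x)|$; for non-negatively homogeneous operators $A$, $\|A\|\coloneqq\sup\{\|Af\|\colon\|f\|=1\}$. A lower transition rate operator is a map $\underline{Q}\colon\mathcal{L}(\mathcal{X})\to\mathcal{L}(\mathcal{X})$ such that for all $f,g$, $\lambda\ge0$, $\mu\in\mathbb{R}$, $x,y\in\mathcal{X}$: $\underline{Q}(\mu)=0$; $\underline{Q}(f+g)\ge\underline{Q}f+\underline{Q}g$; $\underline{Q}(\lambda f)=\lambda\underline{Q}f$; $x\ne y\Rightarrow\underline{Q}(\mathbb{I}_y)(x)\ge0$. *)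

theory Defs
  imports "HOL-Analysis.Analysis"
begin

text \<open>L(X) is represented by functions of type 'x \<Rightarrow> real with 'x a finite type.\<close>

definition indic1 :: "'x \<Rightarrow> 'x \<Rightarrow> real" where
  "indic1 y = (\<lambda>x. if x = y then 1 else 0)"

definition fnorm :: "('x::finite \<Rightarrow> real) \<Rightarrow> real" where
  "fnorm f = Max (range (\<lambda>x. \<bar>f x\<bar>))"

definition opnorm :: "(('x::finite \<Rightarrow> real) \<Rightarrow> ('x \<Rightarrow> real)) \<Rightarrow> real" where
  "opnorm A = Sup {fnorm (A f) | f. fnorm f = 1}"

definition lower_transition_rate_operator ::
  "(('x \<Rightarrow> real) \<Rightarrow> ('x \<Rightarrow> real)) \<Rightarrow> bool" where
  "lower_transition_rate_operator Q \<longleftrightarrow>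
     (\<forall>\<mu>::real. Q (\<lambda>_. \<mu>) = (\<lambda>_. 0)) \<and>
     (\<forall>f g. \<forall>x. Q (\<lambda>z. f z + g z) x \<ge> Q f x + Q g x) \<and>
     (\<forall>f (c::real). c \<ge> 0 \<longrightarrow> Q (\<lambda>z. c * f z) = (\<lambda>x. c * Q f x)) \<and>
     (\<forall>x y. x \<noteq> y \<longrightarrow> Q (indic1 y) x \<ge> 0)"

end

theory Submission
  imports Defs
begin

lemma fnorm_ge: "\<bar>f x\<bar> \<le> fnorm f"
  unfolding fnorm_def by (rule Max_ge) auto

lemma fnorm_le: "(\<And>x. \<bar>f x\<bar> \<le> c) \<Longrightarrow> fnorm f \<le> c"
  unfolding fnorm_def by (subst Max_le_iff) auto

lemma fnorm_nonneg: "0 \<le> fnorm f"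
  using order_trans[OF abs_ge_zero fnorm_ge] by blast

definition Kb :: "(('x::finite \<Rightarrow> real) \<Rightarrow> ('x \<Rightarrow> real)) \<Rightarrow> 'x \<Rightarrow> real" where
  "Kb Q x = (\<Sum>y\<in>UNIV. \<bar>Q (indic1 y) x\<bar> + \<bar>Q (\<lambda>z. - indic1 y z) x\<bar>)"

lemma Kb_nonneg: "0 \<le> Kb Q x"
  unfolding Kb_def by (intro sum_nonneg) auto

lemma ltro_zero: "lower_transition_rate_operator Q \<Longrightarrow> Q (\<lambda>_. 0) = (\<lambda>_. 0)"
  unfolding lower_transition_rate_operator_def by blast

lemma ltro_super: "lower_transition_rate_operator Q \<Longrightarrow> Q (\<lambda>z. f z + g z) x \<ge> Q f x + Q g x"
  unfolding lower_transition_rate_operator_def by blast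

lemma ltro_hom: "lower_transition_rate_operator Q \<Longrightarrow> c \<ge> 0 \<Longrightarrow> Q (\<lambda>z. c * f z) = (\<lambda>x. c * Q f x)"
  unfolding lower_transition_rate_operator_def by blast

lemma sum_super:
  assumes Q: "lower_transition_rate_operator Q" and "finite A"
  shows "Q (\<lambda>z. \<Sum>y\<in>A. g y z) x \<ge> (\<Sum>y\<in>A. Q (g y) x)"
  using \<open>finite A\<close>
proof (induction A rule: finite_induct)
  case empty
  then show ?case using ltro_zero[OF Q] by simp
next
  case (insert a F)
  have "Q (\<lambda>z. g a z + (\<Sum>y\<in>F. g y z)) x \<ge> Q (g a) x + Q (\<lambda>z. \<Sum>y\<in>F. g y z) x"
    using ltro_super[OF Q, where f="g a" and g="\<lambda>z. \<Sum>y\<in>F. g y z"] by simp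
  with insert show ?case by simp
qed

lemma decomp: "h = (\<lambda>z. \<Sum>y\<in>(UNIV::'x::finite set). h y * indic1 y z)"
proof (rule ext)
  fix z
  have "(\<Sum>y\<in>UNIV. h y * indic1 y z) = (\<Sum>y\<in>(UNIV::'x set). if z = y then h y else 0)"
    by (rule sum.cong) (auto simp: indic1_def)
  also have "\<dots> = h z" by (subst sum.delta') (simp_all add: UNIV_I)
  finally show "h z = (\<Sum>y\<in>UNIV. h y * indic1 y z)" by simp
qed

lemma lower_bound:
  assumes Q: "lower_transition_rate_operator Q"
  shows "Q h x \<ge> - fnorm h * Kb Q x"
proof -
  have trm: "Q (\<lambda>z. h y * indic1 y z) x \<ge> - fnorm h * (\<bar>Q (indic1 y) x\<bar> + \<bar>Q (\<lambda>z. - indic1 y z) x\<bar>)" for y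
  proof (cases "h y \<ge> 0")
    case True
    have e: "Q (\<lambda>z. h y * indic1 y z) x = h y * Q (indic1 y) x"
      using fun_cong[OF ltro_hom[OF Q True, of "indic1 y"], of x] by simp
    have "h y * Q (indic1 y) x \<ge> - \<bar>h y\<bar> * \<bar>Q (indic1 y) x\<bar>"
      using abs_ge_minus_self[of "h y * Q (indic1 y) x"] abs_mult[of "h y" "Q (indic1 y) x"] by linarith
    moreover have "\<bar>h y\<bar> * \<bar>Q (indic1 y) x\<bar> \<le> fnorm h * (\<bar>Q (indic1 y) x\<bar> + \<bar>Q (\<lambda>z. - indic1 y z) x\<bar>)"
      by (intro mult_mono fnorm_ge) (auto simp: fnorm_nonneg)
    ultimately show ?thesis using e by linarith
  next
    case False
    then have c: "- h y \<ge> 0" by simp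
    have e: "Q (\<lambda>z. h y * indic1 y z) x = (- h y) * Q (\<lambda>z. - indic1 y z) x"
      using ltro_hom[OF Q c, of "\<lambda>z. - indic1 y z"] by simp
    have "(- h y) * Q (\<lambda>z. - indic1 y z) x \<ge> - \<bar>h y\<bar> * \<bar>Q (\<lambda>z. - indic1 y z) x\<bar>"
      using abs_ge_minus_self[of "- h y * Q (\<lambda>z. - indic1 y z) x"] abs_mult[of "- h y" "Q (\<lambda>z. - indic1 y z) x"]
        abs_minus_cancel[of "h y"]
      by (metis abs_minus_cancel abs_mult mult_minus_left abs_ge_minus_self minus_le_iff)
    moreover have "\<bar>h y\<bar> * \<bar>Q (\<lambda>z. - indic1 y z) x\<bar> \<le> fnorm h * (\<bar>Q (indic1 y) x\<bar> + \<bar>Q (\<lambda>z. - indic1 y z) x\<bar>)"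
      by (intro mult_mono fnorm_ge) (auto simp: fnorm_nonneg)
    ultimately show ?thesis using e by linarith
  qed
  have "Q h x = Q (\<lambda>z. \<Sum>y\<in>UNIV. h y * indic1 y z) x" using decomp[of h] by simp
  also have "\<dots> \<ge> (\<Sum>y\<in>UNIV. Q (\<lambda>z. h y * indic1 y z) x)"
    by (rule sum_super[OF Q]) simp
  finally have "Q h x \<ge> (\<Sum>y\<in>UNIV. Q (\<lambda>z. h y * indic1 y z) x)" .
  moreover have "(\<Sum>y\<in>UNIV. Q (\<lambda>z. h y * indic1 y z) x) \<ge> (\<Sum>y\<in>UNIV. - fnorm h * (\<bar>Q (indic1 y) x\<bar> + \<bar>Q (\<lambda>z. - indic1 y z) x\<bar>))"
    by (rule sum_mono) (rule trm)
  moreover have "(\<Sum>y\<in>UNIV. - fnorm h * (\<bar>Q (indic1 y) x\<bar> + \<bar>Q (\<lambda>z. - indic1 y z) x\<bar>)) = - fnorm h * Kb Q x"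
    unfolding Kb_def by (simp add: sum_distrib_left)
  ultimately show ?thesis by linarith
qed

lemma diff_bound:
  assumes Q: "lower_transition_rate_operator Q"
  shows "Q f x - Q g x \<ge> - fnorm (\<lambda>z. f z - g z) * Kb Q x"
proof -
  have "Q (\<lambda>z. (f z - g z) + g z) x \<ge> Q (\<lambda>z. f z - g z) x + Q g x"
    by (rule ltro_super[OF Q])
  then have "Q f x \<ge> Q (\<lambda>z. f z - g z) x + Q g x" by simp
  with lower_bound[OF Q, of "\<lambda>z. f z - g z" x] show ?thesis by linarith
qed

lemma fnorm_swap: "fnorm (\<lambda>z. f z - g z) = fnorm (\<lambda>z. g z - f z)"
proof (intro antisym fnorm_le)
  fix z
  show "\<bar>f z - g z\<bar> \<le> fnorm (\<lambda>z. g z - f z)" using fnorm_ge[of "\<lambda>z. g z - f z" z] by (simp add: abs_minus_commute)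
  show "\<bar>g z - f z\<bar> \<le> fnorm (\<lambda>z. f z - g z)" using fnorm_ge[of "\<lambda>z. f z - g z" z] by (simp add: abs_minus_commute)
qed

lemma lip:
  assumes Q: "lower_transition_rate_operator Q"
  shows "\<bar>Q f x - Q g x\<bar> \<le> fnorm (\<lambda>z. f z - g z) * Kb Q x"
proof -
  have "fnorm (\<lambda>z. g z - f z) * Kb Q x = fnorm (\<lambda>z. f z - g z) * Kb Q x"
    using fnorm_swap[of f g] by simp
  then show ?thesis
    using diff_bound[OF Q, of f g x] diff_bound[OF Q, of g f x] unfolding abs_le_iff by linarith
qed

lemma abs_bound:
  assumes Q: "lower_transition_rate_operator Q"
  shows "\<bar>Q h x\<bar> \<le> fnorm h * Kb Q x"
  using lip[OF Q, of h x "\<lambda>_. 0"] ltro_zero[OF Q] by simp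


lemma fnorm_attained: "\<exists>x. fnorm f = \<bar>f x\<bar>"
proof -
  have "Max (range (\<lambda>x. \<bar>f x\<bar>)) \<in> range (\<lambda>x. \<bar>f x\<bar>)" by (rule Max_in) auto
  then obtain x where "Max (range (\<lambda>x. \<bar>f x\<bar>)) = \<bar>f x\<bar>" by blast
  then show ?thesis unfolding fnorm_def by blast
qed

lemma fnorm_const1: "fnorm (\<lambda>_::'x::finite. 1::real) = 1"
  using fnorm_attained[of "\<lambda>_::'x. 1::real"] by auto

lemma Dbound:
  assumes P: "lower_transition_rate_operator P" and Q: "lower_transition_rate_operator Q"
  shows "fnorm (\<lambda>x. P f x - Q f x) \<le> fnorm f * (fnorm (Kb P) + fnorm (Kb Q))"
proof (rule fnorm_le)
  fix x
  have "\<bar>P f x - Q f x\<bar> \<le> \<bar>P f x\<bar> + \<bar>Q f x\<bar>" by linarith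
  also have "\<dots> \<le> fnorm f * Kb P x + fnorm f * Kb Q x"
    using abs_bound[OF P, of f x] abs_bound[OF Q, of f x] by linarith
  also have "\<dots> \<le> fnorm f * (fnorm (Kb P) + fnorm (Kb Q))"
  proof -
    have "Kb P x \<le> fnorm (Kb P)" "Kb Q x \<le> fnorm (Kb Q)"
      using fnorm_ge[of "Kb P" x] fnorm_ge[of "Kb Q" x] by auto
    then show ?thesis using fnorm_nonneg[of f]
      by (simp add: distrib_left add_mono mult_left_mono)
  qed
  finally show "\<bar>P f x - Q f x\<bar> \<le> fnorm f * (fnorm (Kb P) + fnorm (Kb Q))" .
qed

lemma opnorm_ge:
  fixes f :: "'x::finite \<Rightarrow> real"
  assumes P: "lower_transition_rate_operator P" and Q: "lower_transition_rate_operator Q"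
    and f: "fnorm f = 1"
  shows "fnorm (\<lambda>x. P f x - Q f x) \<le> opnorm (\<lambda>f x. P f x - Q f x)"
  unfolding opnorm_def
proof (rule cSup_upper)
  show "fnorm (\<lambda>x. P f x - Q f x) \<in> {fnorm ((\<lambda>f x. P f x - Q f x) f) |f. fnorm f = 1}"
    using f by auto
  show "bdd_above {fnorm ((\<lambda>f x. P f x - Q f x) f) |f. fnorm f = 1}"
    unfolding bdd_above_def apply (rule exI[of _ "fnorm (Kb P) + fnorm (Kb Q)"])
  proof clarify
    fix g :: "'x \<Rightarrow> real" assume "fnorm g = 1"
    then show "fnorm (\<lambda>x. P g x - Q g x) \<le> fnorm (Kb P) + fnorm (Kb Q)"
      using Dbound[OF P Q, of g] by simp
  qed
qed

lemma opnorm_le: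
  assumes "\<And>f. fnorm f = 1 \<Longrightarrow> fnorm (A f) \<le> c"
  shows "opnorm (A :: ('x::finite \<Rightarrow> real) \<Rightarrow> ('x \<Rightarrow> real)) \<le> c"
  unfolding opnorm_def
proof (rule cSup_least)
  have "fnorm (A (\<lambda>_. 1)) \<in> {fnorm (A f) |f. fnorm f = 1}" using fnorm_const1 by blast
  then show "{fnorm (A f) |f. fnorm f = 1} \<noteq> {}" by blast
  show "\<And>x. x \<in> {fnorm (A f) |f. fnorm f = 1} \<Longrightarrow> x \<le> c" using assms by auto
qed

lemma opnorm_nonneg:
  assumes P: "lower_transition_rate_operator P" and Q: "lower_transition_rate_operator Q"
  shows "0 \<le> opnorm (\<lambda>(f::'x::finite \<Rightarrow> real) x. P f x - Q f x)"
  using opnorm_ge[OF P Q fnorm_const1] fnorm_nonneg[of "\<lambda>x. P (\<lambda>_. 1) x - Q (\<lambda>_. 1) x"] by linarith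

lemma fwd:
  assumes P: "lower_transition_rate_operator P" and Q: "lower_transition_rate_operator Q"
  shows "fnorm (\<lambda>x. P f x - Q f x) \<le> fnorm f * opnorm (\<lambda>(f::'x::finite \<Rightarrow> real) x. P f x - Q f x)"
proof (cases "fnorm f = 0")
  case True
  have "f = (\<lambda>_. 0)"
  proof
    fix z show "f z = 0" using fnorm_ge[of f z] True by simp
  qed
  then show ?thesis using ltro_zero[OF P] ltro_zero[OF Q] True by (simp add: fnorm_def)
next
  case False
  define c where "c = fnorm f"
  have c: "c > 0" using False fnorm_nonneg[of f] c_def by linarith
  define u where "u = (\<lambda>z. f z / c)"
  have fu: "f = (\<lambda>z. c * u z)" using c unfolding u_def by auto
  obtain x0 where x0: "fnorm f = \<bar>f x0\<bar>" using fnorm_attained by blast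
  have "fnorm u = 1"
  proof (rule antisym)
    show "fnorm u \<le> 1" using fnorm_ge[of f] c unfolding u_def c_def
      by (intro fnorm_le) (simp add: abs_div)
    have "\<bar>u x0\<bar> = 1" using x0 c unfolding u_def c_def by (simp add: abs_div)
    then show "1 \<le> fnorm u" using fnorm_ge[of u x0] by simp
  qed
  then have ou: "fnorm (\<lambda>x. P u x - Q u x) \<le> opnorm (\<lambda>f x. P f x - Q f x)"
    by (rule opnorm_ge[OF P Q])
  have "(\<lambda>x. P f x - Q f x) = (\<lambda>x. c * (P u x - Q u x))"
    unfolding fu using ltro_hom[OF P, of c u] ltro_hom[OF Q, of c u] c
    by (simp add: right_diff_distrib)
  moreover have "fnorm (\<lambda>x. c * (P u x - Q u x)) \<le> c * opnorm (\<lambda>f x. P f x - Q f x)"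
  proof (rule fnorm_le)
    fix x
    have "\<bar>c * (P u x - Q u x)\<bar> = c * \<bar>P u x - Q u x\<bar>" using c by (simp add: abs_mult)
    also have "\<dots> \<le> c * opnorm (\<lambda>f x. P f x - Q f x)"
      using fnorm_ge[of "\<lambda>x. P u x - Q u x" x] ou c by (intro mult_left_mono) auto
    finally show "\<bar>c * (P u x - Q u x)\<bar> \<le> c * opnorm (\<lambda>f x. P f x - Q f x)" .
  qed
  ultimately show ?thesis unfolding c_def by simp
qed

lemma Kb_conv:
  fixes Qn :: "nat \<Rightarrow> ('x::finite \<Rightarrow> real) \<Rightarrow> ('x \<Rightarrow> real)"
  assumes conv: "\<And>f. (\<lambda>n. fnorm (\<lambda>x. Qn n f x - Q f x)) \<longlonglongrightarrow> 0"
  shows "eventually (\<lambda>n. \<forall>x. Kb (Qn n) x \<le> fnorm (Kb Q) + 2 * real CARD('x)) sequentially"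
proof -
  have "\<And>y. eventually (\<lambda>n. fnorm (\<lambda>x. Qn n (indic1 y) x - Q (indic1 y) x) < 1 \<and>
           fnorm (\<lambda>x. Qn n (\<lambda>z. - indic1 y z) x - Q (\<lambda>z. - indic1 y z) x) < 1) sequentially"
    using conv by (intro eventually_conj order_tendstoD(2)) auto
  then have "eventually (\<lambda>n. \<forall>y. fnorm (\<lambda>x. Qn n (indic1 y) x - Q (indic1 y) x) < 1 \<and>
           fnorm (\<lambda>x. Qn n (\<lambda>z. - indic1 y z) x - Q (\<lambda>z. - indic1 y z) x) < 1) sequentially"
    by (rule eventually_all_finite)
  then show ?thesis
  proof (rule eventually_mono, intro allI)
    fix n x
    assume H: "\<forall>y. fnorm (\<lambda>x. Qn n (indic1 y) x - Q (indic1 y) x) < 1 \<and>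
           fnorm (\<lambda>x. Qn n (\<lambda>z. - indic1 y z) x - Q (\<lambda>z. - indic1 y z) x) < 1"
    have "Kb (Qn n) x \<le> (\<Sum>y\<in>UNIV. (\<bar>Q (indic1 y) x\<bar> + \<bar>Q (\<lambda>z. - indic1 y z) x\<bar>) + 2)"
      unfolding Kb_def
    proof (rule sum_mono)
      fix y
      have Hy: "fnorm (\<lambda>x. Qn n (indic1 y) x - Q (indic1 y) x) < 1"
          "fnorm (\<lambda>x. Qn n (\<lambda>z. - indic1 y z) x - Q (\<lambda>z. - indic1 y z) x) < 1"
        using spec[OF H, of y] by auto
      have a: "\<bar>Qn n (indic1 y) x - Q (indic1 y) x\<bar> < 1"
        using Hy(1) fnorm_ge[of "\<lambda>x. Qn n (indic1 y) x - Q (indic1 y) x" x] by linarith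
      have b: "\<bar>Qn n (\<lambda>z. - indic1 y z) x - Q (\<lambda>z. - indic1 y z) x\<bar> < 1"
        using Hy(2) fnorm_ge[of "\<lambda>x. Qn n (\<lambda>z. - indic1 y z) x - Q (\<lambda>z. - indic1 y z) x" x] by linarith
      show "\<bar>Qn n (indic1 y) x\<bar> + \<bar>Qn n (\<lambda>z. - indic1 y z) x\<bar>
          \<le> \<bar>Q (indic1 y) x\<bar> + \<bar>Q (\<lambda>z. - indic1 y z) x\<bar> + 2"
        using a b by linarith
    qed
    also have "\<dots> = Kb Q x + 2 * real CARD('x)"
      unfolding Kb_def by (simp add: sum.distrib)
    also have "\<dots> \<le> fnorm (Kb Q) + 2 * real CARD('x)"
      using fnorm_ge[of "Kb Q" x] by simp
    finally show "Kb (Qn n) x \<le> fnorm (Kb Q) + 2 * real CARD('x)" .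
  qed
qed

lemma bwd_eps:
  fixes Qn :: "nat \<Rightarrow> ('x::finite \<Rightarrow> real) \<Rightarrow> ('x \<Rightarrow> real)"
  assumes Q: "lower_transition_rate_operator Q"
    and Qn: "\<And>n. lower_transition_rate_operator (Qn n)"
    and conv: "\<And>f. (\<lambda>n. fnorm (\<lambda>x. Qn n f x - Q f x)) \<longlonglongrightarrow> 0"
    and e: "e > 0"
  shows "eventually (\<lambda>n. opnorm (\<lambda>f x. Qn n f x - Q f x) \<le> e) sequentially"
proof -
  define B where "B = fnorm (Kb Q) + 2 * real CARD('x)"
  have B0: "B \<ge> 0" unfolding B_def using fnorm_nonneg[of "Kb Q"] by simp
  define d where "d = e / (4 * (B + 1))"
  have d0: "d > 0" unfolding d_def using B0 e by simp
  have dB: "d * B * 2 \<le> e / 2"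
  proof -
    have "d * (4 * (B + 1)) = e" unfolding d_def using B0 by simp
    moreover have "d * B * 2 \<le> d * (B + 1) * 2" using d0 by simp
    ultimately show ?thesis by (simp add: algebra_simps)
  qed
  define N :: int where "N = ceiling (1 / d) + 1"
  define G where "G = PiE (UNIV :: 'x set) (\<lambda>_. (\<lambda>k. of_int k * d) ` {-N..N})"
  have finG: "finite G" unfolding G_def by (intro finite_PiE) auto
  have net: "\<exists>g\<in>G. fnorm (\<lambda>z. h z - g z) \<le> d" if h: "fnorm h = 1" for h :: "'x \<Rightarrow> real"
  proof
    define g where "g = (\<lambda>x. of_int (floor (h x / d)) * d)"
    show "g \<in> G" unfolding G_def PiE_iff
    proof (intro conjI ballI)
      fix x :: 'x
      have hx: "\<bar>h x\<bar> \<le> 1" using fnorm_ge[of h x] h by simp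
      have "h x / d \<le> 1 / d" using hx d0 by (simp add: divide_right_mono)
      then have u: "floor (h x / d) \<le> N" unfolding N_def
        using floor_mono[of "h x / d" "1 / d"] floor_le_ceiling[of "1 / d"] by linarith
      have "- (1 / d) \<le> h x / d" using hx d0 divide_right_mono[of "-1" "h x" d] by simp
      then have "floor (- (1/d)) \<le> floor (h x / d)" by (rule floor_mono)
      then have l: "- N \<le> floor (h x / d)" unfolding N_def
        by (simp add: ceiling_def)
      show "g x \<in> (\<lambda>k. of_int k * d) ` {-N..N}" unfolding g_def using u l by auto
    qed auto
    show "fnorm (\<lambda>z. h z - g z) \<le> d"
    proof (rule fnorm_le)
      fix x
      have a: "of_int (floor (h x / d)) \<le> h x / d" by (rule of_int_floor_le)
      have b: "h x / d < of_int (floor (h x / d)) + 1" by (rule real_of_int_floor_add_one_gt)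
      have a': "of_int (floor (h x / d)) * d \<le> h x" using mult_right_mono[OF a, of d] d0 by simp
      have b': "h x < (of_int (floor (h x / d)) + 1) * d" using mult_strict_right_mono[OF b d0] d0 by simp
      show "\<bar>h x - g x\<bar> \<le> d" unfolding g_def using a' b' by (simp add: algebra_simps)
    qed
  qed
  have ev1: "eventually (\<lambda>n. \<forall>g\<in>G. fnorm (\<lambda>x. Qn n g x - Q g x) < e / 2) sequentially"
    using finG conv e by (intro eventually_ball_finite ballI order_tendstoD(2)) auto
  have ev2: "eventually (\<lambda>n. \<forall>x. Kb (Qn n) x \<le> B) sequentially"
    unfolding B_def by (rule Kb_conv[OF conv])
  show ?thesis using ev1 ev2
  proof (rule eventually_elim2)
    fix n
    assume H1: "\<forall>g\<in>G. fnorm (\<lambda>x. Qn n g x - Q g x) < e / 2" and H2: "\<forall>x. Kb (Qn n) x \<le> B"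
    show "opnorm (\<lambda>f x. Qn n f x - Q f x) \<le> e"
    proof (rule opnorm_le)
      fix h :: "'x \<Rightarrow> real" assume h: "fnorm h = 1"
      obtain g where g: "g \<in> G" and hg: "fnorm (\<lambda>z. h z - g z) \<le> d" using net[OF h] by blast
      show "fnorm (\<lambda>x. Qn n h x - Q h x) \<le> e"
      proof (rule fnorm_le)
        fix x
        have t1: "\<bar>Qn n h x - Qn n g x\<bar> \<le> d * B"
        proof -
          have "\<bar>Qn n h x - Qn n g x\<bar> \<le> fnorm (\<lambda>z. h z - g z) * Kb (Qn n) x" by (rule lip[OF Qn])
          also have "\<dots> \<le> d * B" using hg H2 Kb_nonneg d0 by (intro mult_mono) auto
          finally show ?thesis .
        qed
        have t3: "\<bar>Q g x - Q h x\<bar> \<le> d * B"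
        proof -
          have "\<bar>Q g x - Q h x\<bar> = \<bar>Q h x - Q g x\<bar>" by simp
          also have "\<dots> \<le> fnorm (\<lambda>z. h z - g z) * Kb Q x" by (rule lip[OF Q])
          also have "\<dots> \<le> d * B" using hg Kb_nonneg d0 fnorm_ge[of "Kb Q" x] unfolding B_def
            by (intro mult_mono) auto
          finally show ?thesis .
        qed
        have t2: "\<bar>Qn n g x - Q g x\<bar> < e / 2"
          using bspec[OF H1 g] fnorm_ge[of "\<lambda>x. Qn n g x - Q g x" x] by linarith
        show "\<bar>Qn n h x - Q h x\<bar> \<le> e" using t1 t2 t3 dB by linarith
      qed
    qed
  qed
qed

theorem proposition5:
  fixes Q :: "('x::finite \<Rightarrow> real) \<Rightarrow> ('x \<Rightarrow> real)"
    and Qn :: "nat \<Rightarrow> ('x \<Rightarrow> real) \<Rightarrow> ('x \<Rightarrow> real)"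
  assumes "lower_transition_rate_operator Q"
    and "\<And>n. lower_transition_rate_operator (Qn n)"
  shows "(\<lambda>n. opnorm (\<lambda>f x. Qn n f x - Q f x)) \<longlonglongrightarrow> 0
     \<longleftrightarrow> (\<forall>f. (\<lambda>n. fnorm (\<lambda>x. Qn n f x - Q f x)) \<longlonglongrightarrow> 0)"
proof
  assume L: "(\<lambda>n. opnorm (\<lambda>f x. Qn n f x - Q f x)) \<longlonglongrightarrow> 0"
  show "\<forall>f. (\<lambda>n. fnorm (\<lambda>x. Qn n f x - Q f x)) \<longlonglongrightarrow> 0"
  proof
    fix f :: "'x \<Rightarrow> real"
    have u: "(\<lambda>n. fnorm f * opnorm (\<lambda>f x. Qn n f x - Q f x)) \<longlonglongrightarrow> 0"
      using tendsto_mult_right_zero[OF L, of "fnorm f"] by simp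
    have lo: "\<forall>n. 0 \<le> fnorm (\<lambda>x. Qn n f x - Q f x)" using fnorm_nonneg by blast
    have hi: "\<forall>n. fnorm (\<lambda>x. Qn n f x - Q f x) \<le> fnorm f * opnorm (\<lambda>f x. Qn n f x - Q f x)"
      using fwd[OF assms(2) assms(1)] by blast
    show "(\<lambda>n. fnorm (\<lambda>x. Qn n f x - Q f x)) \<longlonglongrightarrow> 0"
      by (rule tendsto_sandwich[OF always_eventually always_eventually tendsto_const u]) (use lo hi in auto)
  qed
next
  assume R: "\<forall>f. (\<lambda>n. fnorm (\<lambda>x. Qn n f x - Q f x)) \<longlonglongrightarrow> 0"
  show "(\<lambda>n. opnorm (\<lambda>f x. Qn n f x - Q f x)) \<longlonglongrightarrow> 0"
  proof (rule order_tendstoI)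
    fix a :: real assume "a < 0"
    then show "eventually (\<lambda>n. a < opnorm (\<lambda>f x. Qn n f x - Q f x)) sequentially"
    proof (intro always_eventually allI)
      fix n
      show "a < opnorm (\<lambda>f x. Qn n f x - Q f x)"
        using \<open>a < 0\<close> opnorm_nonneg[OF assms(2)[of n] assms(1)] by linarith
    qed
  next
    fix a :: real assume a: "a > 0"
    have "eventually (\<lambda>n. opnorm (\<lambda>f x. Qn n f x - Q f x) \<le> a / 2) sequentially"
      using R a by (intro bwd_eps[OF assms]) auto
    then show "eventually (\<lambda>n. opnorm (\<lambda>f x. Qn n f x - Q f x) < a) sequentially"
      by (rule eventually_mono) (use a in linarith)
  qed
qed

end
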